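(* Let $X$ be a proper geodesic metric space which is coarsely path-connected, let $\alpha:\mathbb{R}_+\to X$ be a coarse $\mathbb{R}_+$-basepoint, and set $p=\alpha(0)$. Let $A\subseteq X$ be a dispersed set. Then there exist functions $\gamma,\rho:\mathbb{R}_+\to\mathbb{R}_+$ such that (1) $\gamma(R)>R$ for all $R>0$; and (2) for every $R>0$ and every $x\in A\setminus B_p(\gamma(R))$ there is a path $h_x:[0,k_x]\to X$ with (a) $h_x(0)=x$ and $h_x(k_x)\in\mathrm{Im}(\alpha)$; (b) $\mathrm{Im}(h_x)\cap B_p(R)=\emptyset$; (c) $h_x$ is $\rho$-bornologous; (d) $k_x\le 2\|x\|$, where $\|x\|=d(x,p)$.
   Context: Notation: $\mathbb{R}_+=[0,\infty)$, $B_p(r)=\{x:d(x,p)<r\}$. A (not necessarily continuous) map is controlled if for every $r>0$ there is $S>0$ with $d(x,x')<r\Rightarrow d(f(x),f(x'))<S$; proper if preimages of bounded sets are bounded; coarse if both. A map $f$ is $\rho$-bornologous if $d(f(x),f(x'))\le\rho(d(x,x'))$ for all $x,x'$. For a coarse $q:Z\to\mathbb{R}_+$, $I_qZ=\{(z,t)\in Z\times\mathbb{R}_+: t\le q(z)\}$ (product sup metric), $i_0(z)=(z,0)$, $i_1(z)=(z,q(z))$; coarse maps $f,g:Z\to X$ are coarsely homotopic if there exist a coarse $q$ and a coarse $H:I_qZ\to X$ with $H\circ i_0=f$, $H\circ i_1=g$. A coarse $\mathbb{R}_+$-basepoint is a coarse map $\mathbb{R}_+\to X$ close to a quasi-geodesic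 ray; $X$ is coarsely path-connected if any two coarse $\mathbb{R}_+$-basepoints are coarsely homotopic. A discrete subset $A\subseteq X$ is dispersed if $\partial(r)=\inf\{d(x_1,x_2): x_1\ne x_2\in A\setminus B_p(r)\}\to\infty$ as $r\to\infty$. *)

theory Defs
  imports "HOL-Analysis.Analysis"
begin

definition bounded_wrt :: "('a \<Rightarrow> 'a \<Rightarrow> real) \<Rightarrow> 'a set \<Rightarrow> bool" where
  "bounded_wrt d S \<longleftrightarrow> (\<exists>r. \<forall>x\<in>S. \<forall>y\<in>S. d x y \<le> r)"

definition controlled_wrt ::
  "('a \<Rightarrow> 'a \<Rightarrow> real) \<Rightarrow> ('b \<Rightarrow> 'b \<Rightarrow> real) \<Rightarrow> 'a set \<Rightarrow> ('a \<Rightarrow> 'b) \<Rightarrow> bool" where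
  "controlled_wrt d1 d2 S f \<longleftrightarrow>
     (\<forall>r>0. \<exists>C>0. \<forall>x\<in>S. \<forall>x'\<in>S. d1 x x' < r \<longrightarrow> d2 (f x) (f x') < C)"

definition cproper_wrt ::
  "('a \<Rightarrow> 'a \<Rightarrow> real) \<Rightarrow> ('b \<Rightarrow> 'b \<Rightarrow> real) \<Rightarrow> 'a set \<Rightarrow> ('a \<Rightarrow> 'b) \<Rightarrow> bool" where
  "cproper_wrt d1 d2 S f \<longleftrightarrow>
     (\<forall>B. bounded_wrt d2 B \<longrightarrow> bounded_wrt d1 {x\<in>S. f x \<in> B})"

definition coarse_wrt ::
  "('a \<Rightarrow> 'a \<Rightarrow> real) \<Rightarrow> ('b \<Rightarrow> 'b \<Rightarrow> real) \<Rightarrow> 'a set \<Rightarrow> ('a \<Rightarrow> 'b) \<Rightarrow> bool" where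
  "coarse_wrt d1 d2 S f \<longleftrightarrow> controlled_wrt d1 d2 S f \<and> cproper_wrt d1 d2 S f"

definition supdist :: "real \<times> real \<Rightarrow> real \<times> real \<Rightarrow> real" where
  "supdist u v = max \<bar>fst u - fst v\<bar> \<bar>snd u - snd v\<bar>"

definition Iq :: "(real \<Rightarrow> real) \<Rightarrow> (real \<times> real) set" where
  "Iq q = {(z, t). 0 \<le> z \<and> 0 \<le> t \<and> t \<le> q z}"

definition coarsely_homotopic :: "(real \<Rightarrow> 'a::metric_space) \<Rightarrow> (real \<Rightarrow> 'a) \<Rightarrow> bool" where
  "coarsely_homotopic f g \<longleftrightarrow>
     (\<exists>q H. (\<forall>z\<ge>0. q z \<ge> 0) \<and> coarse_wrt dist dist {0..} q \<and>
            coarse_wrt supdist dist (Iq q) H \<and>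
            (\<forall>z\<ge>0. H (z, 0) = f z) \<and> (\<forall>z\<ge>0. H (z, q z) = g z))"

definition quasi_geodesic_ray :: "(real \<Rightarrow> 'a::metric_space) \<Rightarrow> bool" where
  "quasi_geodesic_ray \<beta> \<longleftrightarrow>
     (\<exists>L c. L \<ge> 1 \<and> c \<ge> 0 \<and> (\<forall>s\<ge>0. \<forall>t\<ge>0.
        \<bar>s - t\<bar> / L - c \<le> dist (\<beta> s) (\<beta> t) \<and> dist (\<beta> s) (\<beta> t) \<le> L * \<bar>s - t\<bar> + c))"

definition coarse_basepoint :: "(real \<Rightarrow> 'a::metric_space) \<Rightarrow> bool" where
  "coarse_basepoint \<alpha> \<longleftrightarrow> coarse_wrt dist dist {0..} \<alpha> \<and>
     (\<exists>\<beta> C. quasi_geodesic_ray \<beta> \<and> (\<forall>t\<ge>0. dist (\<alpha> t) (\<beta> t) \<le> C))"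

definition coarsely_path_connected :: "'a::metric_space itself \<Rightarrow> bool" where
  "coarsely_path_connected (_::'a itself) \<longleftrightarrow>
     (\<forall>f g :: real \<Rightarrow> 'a. coarse_basepoint f \<and> coarse_basepoint g \<longrightarrow> coarsely_homotopic f g)"

definition proper_metric :: "'a::metric_space itself \<Rightarrow> bool" where
  "proper_metric (_::'a itself) \<longleftrightarrow> (\<forall>x::'a. \<forall>r. compact (cball x r))"

definition geodesic_space :: "'a::metric_space itself \<Rightarrow> bool" where
  "geodesic_space (_::'a itself) \<longleftrightarrow>
     (\<forall>x y::'a. \<exists>g. g 0 = x \<and> g (dist x y) = y \<and>
        (\<forall>s\<in>{0..dist x y}. \<forall>t\<in>{0..dist x y}. dist (g s) (g t) = \<bar>s - t\<bar>))"

definition discrete_set :: "'a::metric_space set \<Rightarrow> bool" where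
  "discrete_set A \<longleftrightarrow> (\<forall>x\<in>A. \<exists>e>0. \<forall>y\<in>A. dist x y < e \<longrightarrow> y = x)"

text \<open>Dispersed w.r.t. p: the infimum of distances between distinct points of A outside
  B_p(r) tends to infinity (empty infimum = +infinity).\<close>
definition dispersed :: "'a::metric_space \<Rightarrow> 'a set \<Rightarrow> bool" where
  "dispersed p A \<longleftrightarrow> discrete_set A \<and>
     (\<forall>M. \<exists>r0. \<forall>r\<ge>r0. \<forall>x1\<in>A - ball p r. \<forall>x2\<in>A - ball p r. x1 \<noteq> x2 \<longrightarrow> M \<le> dist x1 x2)"

definition bornologous_on :: "real set \<Rightarrow> (real \<Rightarrow> real) \<Rightarrow> (real \<Rightarrow> 'a::metric_space) \<Rightarrow> bool" where
  "bornologous_on S \<rho> h \<longleftrightarrow> (\<forall>s\<in>S. \<forall>t\<in>S. dist (h s) (h t) \<le> \<rho> (dist s t))"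

end

theory Submission
  imports Defs
begin


definition lp :: "'a::metric_space \<Rightarrow> real \<Rightarrow> 'a \<Rightarrow> 'a \<Rightarrow> real \<Rightarrow> bool" where
  "lp p R y z l \<longleftrightarrow> (\<exists>g. l \<ge> 0 \<and> g 0 = y \<and> g l = z \<and>
      (\<forall>s\<in>{0..l}. \<forall>t\<in>{0..l}. dist (g s) (g t) \<le> \<bar>s - t\<bar>) \<and> (\<forall>t\<in>{0..l}. dist (g t) p > R))"

definition conn :: "'a::metric_space \<Rightarrow> real \<Rightarrow> 'a \<Rightarrow> 'a \<Rightarrow> bool" where
  "conn p R y z \<longleftrightarrow> (\<exists>l. lp p R y z l)"

lemma lp_refl: "dist y p > R \<Longrightarrow> lp p R y y 0"
  unfolding lp_def by (rule exI[of _ "\<lambda>_. y"]) auto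

lemma lp_trans:
  assumes "lp p R y z l1" "lp p R z w l2" shows "lp p R y w (l1 + l2)"
proof -
  obtain g1 where g1: "l1 \<ge> 0" "g1 0 = y" "g1 l1 = z"
    "\<forall>s\<in>{0..l1}. \<forall>t\<in>{0..l1}. dist (g1 s) (g1 t) \<le> \<bar>s - t\<bar>" "\<forall>t\<in>{0..l1}. dist (g1 t) p > R"
    using assms(1) unfolding lp_def by blast
  obtain g2 where g2: "l2 \<ge> 0" "g2 0 = z" "g2 l2 = w"
    "\<forall>s\<in>{0..l2}. \<forall>t\<in>{0..l2}. dist (g2 s) (g2 t) \<le> \<bar>s - t\<bar>" "\<forall>t\<in>{0..l2}. dist (g2 t) p > R"
    using assms(2) unfolding lp_def by blast
  define g where "g = (\<lambda>t. if t \<le> l1 then g1 t else g2 (t - l1))"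
  have A: "dist (g s) (g t) \<le> \<bar>s - t\<bar>" if "s \<in> {0..l1+l2}" "t \<in> {0..l1+l2}" "s \<le> t" for s t
  proof (cases "t \<le> l1")
    case True then show ?thesis using that g1(4)[rule_format, of s t] by (simp add: g_def)
  next
    case False
    show ?thesis
    proof (cases "s \<le> l1")
      case True
      have "dist (g1 s) (g2 (t - l1)) \<le> dist (g1 s) (g1 l1) + dist (g2 0) (g2 (t - l1))"
        using g1(3) g2(2) dist_triangle by metis
      also have "\<dots> \<le> \<bar>s - l1\<bar> + \<bar>0 - (t - l1)\<bar>"
        using g1(4)[rule_format, of s l1] g2(4)[rule_format, of 0 "t - l1"] that True False g1(1) g2(1) by (intro add_mono) auto
      finally show ?thesis using True False that by (simp add: g_def)
    next
      case f2: False
      show ?thesis using g2(4) that False f2 by (simp add: g_def) (smt (verit) atLeastAtMost_iff)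
    qed
  qed
  have B: "dist (g s) (g t) \<le> \<bar>s - t\<bar>" if "s \<in> {0..l1+l2}" "t \<in> {0..l1+l2}" for s t
    using A[OF that] A[OF that(2,1)] by (cases "s \<le> t") (auto simp: dist_commute)
  have C: "dist (g t) p > R" if "t \<in> {0..l1+l2}" for t
    using that g1 g2 by (auto simp: g_def)
  show ?thesis unfolding lp_def
    by (rule exI[of _ g]) (use g1 g2 B C in \<open>auto simp: g_def\<close>)
qed

lemma lp_sym:
  assumes "lp p R y z l" shows "lp p R z y l"
proof -
  obtain g where g: "l \<ge> 0" "g 0 = y" "g l = z"
    "\<forall>s\<in>{0..l}. \<forall>t\<in>{0..l}. dist (g s) (g t) \<le> \<bar>s - t\<bar>" "\<forall>t\<in>{0..l}. dist (g t) p > R"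
    using assms unfolding lp_def by blast
  show ?thesis unfolding lp_def
  proof (rule exI[of _ "\<lambda>t. g (l - t)"], intro conjI ballI)
    fix s t assume "s \<in> {0..l}" "t \<in> {0..l}"
    then show "dist (g (l - s)) (g (l - t)) \<le> \<bar>s - t\<bar>" using g(4)[rule_format, of "l-s" "l-t"] by auto
  next
    fix t assume "t \<in> {0..l}" then show "dist (g (l - t)) p > R" using g(5) by auto
  qed (use g in auto)
qed

lemma conn_trans: "conn p R y z \<Longrightarrow> conn p R z w \<Longrightarrow> conn p R y w"
  unfolding conn_def using lp_trans by blast

lemma conn_sym: "conn p R y z \<Longrightarrow> conn p R z y"
  unfolding conn_def using lp_sym by blast

lemma conn_pos: "conn p R y z \<Longrightarrow> dist y p > R \<and> dist z p > R"
  unfolding conn_def lp_def by force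

lemma geod:
  fixes x y :: "'a::metric_space"
  assumes "geodesic_space TYPE('a)"
  shows "\<exists>g. g 0 = x \<and> g (dist x y) = y \<and>
        (\<forall>s\<in>{0..dist x y}. \<forall>t\<in>{0..dist x y}. dist (g s) (g t) = \<bar>s - t\<bar>)"
  using assms unfolding geodesic_space_def by blast

lemma lp_geodesic:
  fixes y z :: "'a::metric_space"
  assumes "geodesic_space TYPE('a)"
    and "\<And>v. dist y v + dist v z = dist y z \<Longrightarrow> dist v p > R"
  shows "lp p R y z (dist y z)"
proof -
  obtain g where g: "g 0 = y" "g (dist y z) = z"
    "\<forall>s\<in>{0..dist y z}. \<forall>t\<in>{0..dist y z}. dist (g s) (g t) = \<bar>s - t\<bar>"
    using geod[OF assms(1)] by blast
  have "dist (g t) p > R" if "t \<in> {0..dist y z}" for t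
  proof -
    have "dist y (g t) = t" using g(3)[rule_format, of 0 t] that g(1) by auto
    moreover have "dist (g t) z = dist y z - t" using g(3)[rule_format, of t "dist y z"] that g(2) by auto
    ultimately show ?thesis using assms(2) by auto
  qed
  then show ?thesis unfolding lp_def using g by (intro exI[of _ g]) auto
qed

lemma conn_near:
  fixes y z :: "'a::metric_space"
  assumes "geodesic_space TYPE('a)" "dist y p > R + dist y z"
  shows "lp p R y z (dist y z)"
  apply (rule lp_geodesic[OF assms(1)])
  using assms(2) dist_triangle[of y p] by (smt (verit) dist_commute dist_triangle2)

lemma lp_toward:
  fixes x :: "'a::metric_space"
  assumes "geodesic_space TYPE('a)" "dist x p \<ge> r" "r > R" "r \<ge> 0"
  shows "\<exists>y. dist y p = r \<and> lp p R x y (dist x p - r)"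
proof -
  obtain g where g: "g 0 = x" "g (dist x p) = p"
    "\<forall>s\<in>{0..dist x p}. \<forall>t\<in>{0..dist x p}. dist (g s) (g t) = \<bar>s - t\<bar>"
    using geod[OF assms(1)] by blast
  have D: "dist (g t) p = dist x p - t" if "t \<in> {0..dist x p}" for t
    using g(3)[rule_format, of t "dist x p"] that g(2) by auto
  show ?thesis
  proof (intro exI conjI)
    show "dist (g (dist x p - r)) p = r" using D[of "dist x p - r"] assms by auto
    show "lp p R x (g (dist x p - r)) (dist x p - r)" unfolding lp_def
    proof (rule exI[of _ g], intro conjI ballI)
      fix s t assume "s \<in> {0..dist x p - r}" "t \<in> {0..dist x p - r}"
      then show "dist (g s) (g t) \<le> \<bar>s - t\<bar>" using g(3) assms by auto
    next
      fix t assume "t \<in> {0..dist x p - r}" then show "dist (g t) p > R" using D[of t] assms by auto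
    qed (use g assms in auto)
  qed
qed



definition Pgood :: "'a::metric_space \<Rightarrow> real \<Rightarrow> 'a \<Rightarrow> nat \<Rightarrow> 'a \<Rightarrow> bool" where
  "Pgood p R y0 n y \<longleftrightarrow> dist y p = real n \<and>
     (\<forall>M \<epsilon>. \<epsilon> > 0 \<longrightarrow> (\<exists>z. conn p R y0 z \<and> dist z p \<ge> M \<and> real n + dist y z \<le> dist z p + \<epsilon>))"

lemma Pgood_step:
  fixes y :: "'a::metric_space"
  assumes geo: "geodesic_space TYPE('a)" and pm: "proper_metric TYPE('a)"
    and P: "Pgood p R y0 n y"
  shows "\<exists>w. Pgood p R y0 (Suc n) w \<and> dist y w = 1"
proof -
  have ny: "dist y p = real n" using P unfolding Pgood_def by blast
  have "\<forall>j::nat. \<exists>z. conn p R y0 z \<and> dist z p \<ge> real n + 2 + real j \<and> real n + dist y z \<le> dist z p + 1 / (real j + 1)"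
    using P unfolding Pgood_def by auto
  then obtain zf where zf: "\<And>j. conn p R y0 (zf j)" "\<And>j. dist (zf j) p \<ge> real n + 2 + real j"
    "\<And>j. real n + dist y (zf j) \<le> dist (zf j) p + 1 / (real j + 1)"
    by metis
  have "\<forall>j. \<exists>w. dist y w = 1 \<and> dist w (zf j) = dist y (zf j) - 1"
  proof
    fix j
    have d1: "dist y (zf j) \<ge> 1" using zf(2)[of j] ny dist_triangle[of "zf j" p y]
      by (simp add: dist_commute)
    obtain g where g: "g 0 = y" "g (dist y (zf j)) = zf j"
        "\<forall>s\<in>{0..dist y (zf j)}. \<forall>t\<in>{0..dist y (zf j)}. dist (g s) (g t) = \<bar>s - t\<bar>"
      using geod[OF geo] by blast
    show "\<exists>w. dist y w = 1 \<and> dist w (zf j) = dist y (zf j) - 1"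
      using g(3)[rule_format, of 0 1] g(3)[rule_format, of 1 "dist y (zf j)"] d1 g(1,2)
      by (intro exI[of _ "g 1"]) auto
  qed
  then obtain wf where wf: "\<And>j. dist y (wf j) = 1" "\<And>j. dist (wf j) (zf j) = dist y (zf j) - 1"
    by metis
  have "compact (cball y 1)" using pm unfolding proper_metric_def by blast
  then have "seq_compact (cball y 1)" by (rule compact_imp_seq_compact)
  moreover have "\<forall>j. wf j \<in> cball y 1" using wf(1) by auto
  ultimately obtain l r where lr: "l \<in> cball y 1" "strict_mono (r :: nat \<Rightarrow> nat)" "(wf \<circ> r) \<longlonglongrightarrow> l"
    by (rule seq_compactE)
  have main: "\<exists>z. conn p R y0 z \<and> dist z p \<ge> M \<and> real (Suc n) + dist l z \<le> dist z p + \<epsilon>"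
    if e: "\<epsilon> > 0" for M \<epsilon>
  proof -
    have e2: "\<epsilon>/2 > 0" using e by simp
    obtain N where N: "\<And>j. j \<ge> N \<Longrightarrow> dist ((wf \<circ> r) j) l < \<epsilon>/2"
      using lr(3) e2 unfolding lim_sequentially by blast
    define j where "j = N + nat \<lceil>M\<rceil> + nat \<lceil>2/\<epsilon>\<rceil>"
    define J where "J = r j"
    have jJ: "j \<le> J" unfolding J_def using seq_suble[OF lr(2)] by blast
    have dJ: "dist (wf J) l < \<epsilon>/2" using N[of j] unfolding J_def j_def by auto
    have c1: "real (nat \<lceil>2/\<epsilon>\<rceil>) \<ge> 2/\<epsilon>" by (meson le_nat_iff of_nat_le_iff real_nat_ceiling_ge order_trans)
    have c2: "real (nat \<lceil>M\<rceil>) \<ge> M" by (meson real_nat_ceiling_ge)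
    have "real j \<ge> 2/\<epsilon>" "real j \<ge> M" using c1 c2 unfolding j_def by auto
    then have jM: "real J \<ge> M" and "real J \<ge> 2/\<epsilon>" using jJ by (auto intro: order_trans)
    then have "2 \<le> \<epsilon> * real J" using e by (simp add: divide_le_eq mult.commute)
    then have "2 < \<epsilon> * (real J + 1)" using e by (simp add: algebra_simps)
    then have iJ: "1 / (real J + 1) < \<epsilon>/2" using e by (simp add: divide_less_eq field_simps)
    have MJ: "dist (zf J) p \<ge> M" using zf(2)[of J] jM by linarith
    have "real (Suc n) + dist l (zf J) \<le> real n + 1 + dist l (wf J) + dist (wf J) (zf J)"
      using dist_triangle[of l "zf J" "wf J"] by simp
    also have "\<dots> = real n + dist y (zf J) + dist l (wf J)" using wf(2)[of J] by simp
    also have "\<dots> \<le> dist (zf J) p + \<epsilon>" using zf(3)[of J] iJ dJ by (simp add: dist_commute)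
    finally show ?thesis using zf(1) MJ by blast
  qed
  have nl: "dist l p = real (Suc n)"
  proof (rule ccontr)
    assume ne: "dist l p \<noteq> real (Suc n)"
    have "dist l p \<le> real (Suc n)" using lr(1) ny dist_triangle[of l p y] by (simp add: dist_commute)
    with ne have lt: "dist l p < real (Suc n)" by simp
    obtain z where z: "real (Suc n) + dist l z \<le> dist z p + (real (Suc n) - dist l p)/2"
      using main[of "(real (Suc n) - dist l p)/2" 0] lt by auto
    have "dist z p \<le> dist l p + dist l z" using dist_triangle[of z p l] by (simp add: dist_commute)
    then show False using z lt by (auto simp: field_simps)
  qed
  have "dist y l = 1"
    using lr(1) nl ny dist_triangle[of l p y] by (simp add: dist_commute)
  then show ?thesis using nl main unfolding Pgood_def by blast
qed

lemma Pgood_conn: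
  fixes y :: "'a::metric_space"
  assumes geo: "geodesic_space TYPE('a)" and P: "Pgood p R y0 n y" and n: "real n \<ge> R + 1"
  shows "conn p R y0 y"
proof -
  obtain z where z: "conn p R y0 z" "real n + dist y z \<le> dist z p + 1/2"
    using P unfolding Pgood_def by (metis half_gt_zero zero_less_one)
  have ny: "dist y p = real n" using P unfolding Pgood_def by blast
  have "lp p R y z (dist y z)"
  proof (rule lp_geodesic[OF geo])
    fix v assume v: "dist y v + dist v z = dist y z"
    have "dist z p \<le> dist v z + dist v p" using dist_triangle[of z p v] by (simp add: dist_commute)
    then show "dist v p > R" using v z n zero_le_dist[of y v] by linarith
  qed
  then have "conn p R y z" unfolding conn_def by blast
  then show ?thesis using z(1) conn_sym conn_trans by metis
qed

lemma ray_exists: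
  fixes p :: "'a::metric_space"
  assumes geo: "geodesic_space TYPE('a)" and pm: "proper_metric TYPE('a)"
    and unb: "\<forall>M. \<exists>z. conn p R y0 z \<and> dist z p \<ge> M"
  shows "\<exists>\<xi>::nat\<Rightarrow>'a. \<forall>n. Pgood p R y0 n (\<xi> n) \<and> dist (\<xi> n) (\<xi> (Suc n)) = 1"
proof -
  have P0: "Pgood p R y0 0 p" unfolding Pgood_def
  proof (intro conjI allI impI)
    fix M \<epsilon> :: real assume "\<epsilon> > 0"
    then show "\<exists>z. conn p R y0 z \<and> dist z p \<ge> M \<and> real 0 + dist p z \<le> dist z p + \<epsilon>"
      using unb by (auto simp: dist_commute)
  qed simp
  have "\<forall>n y. \<exists>w. Pgood p R y0 n y \<longrightarrow> Pgood p R y0 (Suc n) w \<and> dist y w = 1"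
    using Pgood_step[OF geo pm] by blast
  then obtain F where F: "\<And>n y. Pgood p R y0 n y \<Longrightarrow> Pgood p R y0 (Suc n) (F n y) \<and> dist y (F n y) = 1"
    by metis
  define \<xi> where "\<xi> = rec_nat p F"
  have "Pgood p R y0 n (\<xi> n)" for n
    by (induction n) (auto simp: \<xi>_def P0 F)
  moreover have "dist (\<xi> n) (\<xi> (Suc n)) = 1" for n
    using F[OF calculation[of n]] by (simp add: \<xi>_def)
  ultimately show ?thesis by blast
qed



lemma fl_bounds: "(t::real) \<ge> 0 \<Longrightarrow> t - 1 < real (nat \<lfloor>t\<rfloor>) \<and> real (nat \<lfloor>t\<rfloor>) \<le> t"
proof -
  assume t: "t \<ge> 0"
  then have "\<lfloor>t\<rfloor> \<ge> 0" by simp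
  then have "real (nat \<lfloor>t\<rfloor>) = real_of_int \<lfloor>t\<rfloor>" by simp
  with floor_correct[of t] show ?thesis by linarith
qed

lemma abs_aux1: "(s - 1 < a) \<Longrightarrow> (a::real) \<le> s \<Longrightarrow> t - 1 < b \<Longrightarrow> b \<le> t \<Longrightarrow> \<bar>s - t\<bar> / 1 - 1 \<le> \<bar>a - b\<bar> \<and> \<bar>a - b\<bar> \<le> 1 * \<bar>s - t\<bar> + 1"
  unfolding abs_if by auto

lemma abs_aux2: "(s - 1 < a) \<Longrightarrow> (a::real) \<le> s \<Longrightarrow> t - 1 < b \<Longrightarrow> b \<le> t \<Longrightarrow> \<bar>s - t\<bar> < r \<Longrightarrow> \<bar>a - b\<bar> < r + 2"
  unfolding abs_if by (auto split: if_splits)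

lemma key:
  fixes \<alpha> :: "real \<Rightarrow> 'a::metric_space"
  assumes geo: "geodesic_space TYPE('a)" and pm: "proper_metric TYPE('a)"
    and cpc: "coarsely_path_connected TYPE('a)" and ca: "coarse_basepoint \<alpha>"
    and unb: "\<forall>M. \<exists>z. conn (\<alpha> 0) R y0 z \<and> dist z (\<alpha> 0) \<ge> M"
  shows "\<exists>s\<ge>0. conn (\<alpha> 0) R y0 (\<alpha> s)"
proof -
  define p where "p = \<alpha> 0"
  obtain \<xi> :: "nat \<Rightarrow> 'a" where \<xi>: "\<And>n. Pgood p R y0 n (\<xi> n)" "\<And>n. dist (\<xi> n) (\<xi> (Suc n)) = 1"
    using ray_exists[OF geo pm unb[folded p_def]] by blast
  have np: "dist (\<xi> n) p = real n" for n using \<xi>(1)[of n] unfolding Pgood_def by blast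
  have up: "dist (\<xi> n) (\<xi> (n + k)) \<le> real k" for n k
  proof (induction k)
    case (Suc k)
    have "dist (\<xi> n) (\<xi> (n + Suc k)) \<le> dist (\<xi> n) (\<xi> (n + k)) + dist (\<xi> (n + k)) (\<xi> (Suc (n + k)))"
      using dist_triangle by simp
    then show ?case using Suc \<xi>(2)[of "n+k"] by simp
  qed simp
  have d\<xi>: "dist (\<xi> n) (\<xi> m) = \<bar>real n - real m\<bar>" for n m
  proof -
    have lo: "\<bar>real n - real m\<bar> \<le> dist (\<xi> n) (\<xi> m)"
      using np[of n] np[of m] dist_triangle[of "\<xi> n" p "\<xi> m"] dist_triangle[of "\<xi> m" p "\<xi> n"]
      by (simp add: dist_commute abs_le_iff)
    have "dist (\<xi> n) (\<xi> m) \<le> \<bar>real n - real m\<bar>"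
    proof (cases "n \<le> m")
      case True then show ?thesis using up[of n "m - n"] by simp
    next
      case False then show ?thesis using up[of m "n - m"] by (simp add: dist_commute)
    qed
    with lo show ?thesis by simp
  qed
  define \<beta> where "\<beta> = (\<lambda>t::real. \<xi> (nat \<lfloor>t\<rfloor>))"
  have d\<beta>: "dist (\<beta> s) (\<beta> t) = \<bar>real (nat \<lfloor>s\<rfloor>) - real (nat \<lfloor>t\<rfloor>)\<bar>" for s t
    unfolding \<beta>_def by (rule d\<xi>)
  have \<beta>p: "dist (\<beta> t) p = real (nat \<lfloor>t\<rfloor>)" for t unfolding \<beta>_def by (rule np)
  have qg: "quasi_geodesic_ray \<beta>" unfolding quasi_geodesic_ray_def
  proof (intro exI[of _ 1] exI[of _ 1] conjI allI impI)
    fix s t :: real assume "s \<ge> 0" "t \<ge> 0"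
    then have A: "\<bar>s - t\<bar> / 1 - 1 \<le> \<bar>real (nat \<lfloor>s\<rfloor>) - real (nat \<lfloor>t\<rfloor>)\<bar> \<and> \<bar>real (nat \<lfloor>s\<rfloor>) - real (nat \<lfloor>t\<rfloor>)\<bar> \<le> 1 * \<bar>s - t\<bar> + 1"
      using fl_bounds[of s] fl_bounds[of t] by (intro abs_aux1) auto
    then show "\<bar>s - t\<bar> / 1 - 1 \<le> dist (\<beta> s) (\<beta> t)" "dist (\<beta> s) (\<beta> t) \<le> 1 * \<bar>s - t\<bar> + 1"
      unfolding d\<beta> by auto
  qed auto
  have ctl: "controlled_wrt dist dist {0..} \<beta>" unfolding controlled_wrt_def
  proof (intro allI impI exI[of _ "_ + 2"] conjI ballI)
    fix r x x' :: real assume r: "r > 0" and x: "x \<in> {0..}" "x' \<in> {0..}" and xr: "dist x x' < r"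
    have "\<bar>real (nat \<lfloor>x\<rfloor>) - real (nat \<lfloor>x'\<rfloor>)\<bar> < r + 2"
      using fl_bounds[of x] fl_bounds[of x'] x xr unfolding dist_real_def by (intro abs_aux2) auto
    then show "dist (\<beta> x) (\<beta> x') < r + 2" unfolding d\<beta> .
  qed auto
  have prp: "cproper_wrt dist dist {0..} \<beta>" unfolding cproper_wrt_def
  proof (intro allI impI)
    fix B :: "'a set" assume "bounded_wrt dist B"
    then obtain r where r: "\<forall>x\<in>B. \<forall>y\<in>B. dist x y \<le> r" unfolding bounded_wrt_def by blast
    show "bounded_wrt dist {x \<in> {0..}. \<beta> x \<in> B}"
    proof (cases "{x \<in> {0..}. \<beta> x \<in> B} = {}")
      case True then show ?thesis unfolding bounded_wrt_def by auto
    next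
      case False
      then obtain t0 where t0: "t0 \<ge> 0" "\<beta> t0 \<in> B" by auto
      have "t \<le> r + t0 + 1" if "t \<ge> 0" "\<beta> t \<in> B" for t
      proof -
        have "dist (\<beta> t) p \<le> dist (\<beta> t) (\<beta> t0) + dist (\<beta> t0) p" by (rule dist_triangle)
        moreover have "dist (\<beta> t) (\<beta> t0) \<le> r" using r that t0 by blast
        ultimately have "real (nat \<lfloor>t\<rfloor>) \<le> r + real (nat \<lfloor>t0\<rfloor>)" unfolding \<beta>p by linarith
        then show ?thesis using fl_bounds[of t] fl_bounds[of t0] that t0 by linarith
      qed
      then show ?thesis unfolding bounded_wrt_def
        by (intro exI[of _ "r + t0 + 1"]) (force simp: dist_real_def abs_le_iff)
    qed
  qed
  have cb: "coarse_basepoint \<beta>" unfolding coarse_basepoint_def coarse_wrt_def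
    using ctl prp qg by (auto intro!: exI[of _ \<beta>] exI[of _ 0])
  then have "coarsely_homotopic \<beta> \<alpha>" using cpc ca unfolding coarsely_path_connected_def by blast
  then obtain q H where qH: "\<forall>z\<ge>0. q z \<ge> 0" "coarse_wrt supdist dist (Iq q) H"
      "\<forall>z\<ge>0. H (z, 0) = \<beta> z" "\<forall>z\<ge>0. H (z, q z) = \<alpha> z"
    unfolding coarsely_homotopic_def by blast
  obtain C where C: "C > 0" "\<forall>u\<in>Iq q. \<forall>v\<in>Iq q. supdist u v < 1 \<longrightarrow> dist (H u) (H v) < C"
    using qH(2) unfolding coarse_wrt_def controlled_wrt_def by (meson zero_less_one)
  define B where "B = cball p (R + C + 1)"
  have "bounded_wrt dist B" unfolding bounded_wrt_def B_def
    proof (intro exI ballI)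
    fix x y assume "x \<in> cball p (R + C + 1)" "y \<in> cball p (R + C + 1)"
    then show "dist x y \<le> 2 * (R + C + 1)" using dist_triangle[of x y p] by (auto simp: dist_commute)
  qed
  then obtain D where D: "\<forall>u\<in>{u \<in> Iq q. H u \<in> B}. \<forall>v\<in>{u \<in> Iq q. H u \<in> B}. supdist u v \<le> D"
    using qH(2) unfolding coarse_wrt_def cproper_wrt_def bounded_wrt_def by blast
  have "\<exists>Z. \<forall>u\<in>Iq q. fst u \<ge> Z \<longrightarrow> dist (H u) p > R + C + 1"
  proof (cases "{u \<in> Iq q. H u \<in> B} = {}")
    case True then show ?thesis by (auto simp: B_def dist_commute not_le)
  next
    case False
    then obtain u0 where u0: "u0 \<in> Iq q" "H u0 \<in> B" by auto
    show ?thesis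
    proof (intro exI[of _ "fst u0 + D + 1"] ballI impI)
      fix u assume u: "u \<in> Iq q" "fst u \<ge> fst u0 + D + 1"
      show "dist (H u) p > R + C + 1"
      proof (rule ccontr)
        assume "\<not> ?thesis"
        then have "H u \<in> B" by (auto simp: B_def dist_commute)
        then have "supdist u0 u \<le> D" using D u0 u by blast
        then show False using u(2) unfolding supdist_def by auto
      qed
    qed
  qed
  then obtain Z where Z: "\<And>u. u \<in> Iq q \<Longrightarrow> fst u \<ge> Z \<Longrightarrow> dist (H u) p > R + C + 1" by blast
  define n where "n = nat \<lceil>max Z (R + 1)\<rceil>"
  define z where "z = real n"
  have "real n \<ge> max Z (R + 1)" unfolding n_def by (rule real_nat_ceiling_ge)
  then have zZ: "z \<ge> Z" "z \<ge> R + 1" "z \<ge> 0" unfolding z_def by auto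
  have far: "dist (H (z, t)) p > R + C + 1" if "0 \<le> t" "t \<le> q z" for t
    using Z[of "(z, t)"] that zZ unfolding Iq_def by auto
  have walk: "\<forall>t. 0 \<le> t \<and> t \<le> q z \<and> t \<le> real k / 2 \<longrightarrow> conn p R (H (z, 0)) (H (z, t))" for k :: nat
  proof (induction k)
    case 0
    have "lp p R (H (z, 0)) (H (z, 0)) 0" using far[of 0] qH(1) zZ C(1)
      by (intro lp_refl) auto
    then show ?case unfolding conn_def by auto
  next
    case (Suc k)
    show ?case
    proof (intro allI impI)
      fix t assume t: "0 \<le> t \<and> t \<le> q z \<and> t \<le> real (Suc k) / 2"
      show "conn p R (H (z, 0)) (H (z, t))"
      proof (cases "t \<le> real k / 2")
        case True then show ?thesis using Suc t by blast
      next
        case False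
        define t' where "t' = real k / 2"
        have t': "0 \<le> t'" "t' \<le> q z" "t' < t" "t - t' \<le> 1/2" using t False unfolding t'_def by auto
        have "supdist (z, t') (z, t) < 1" using t' unfolding supdist_def by auto
        moreover have "(z, t') \<in> Iq q" "(z, t) \<in> Iq q" using t t' zZ unfolding Iq_def by auto
        ultimately have "dist (H (z, t')) (H (z, t)) < C" using C(2) by blast
        then have "lp p R (H (z, t')) (H (z, t)) (dist (H (z, t')) (H (z, t)))"
          using far[of t'] t' by (intro conn_near[OF geo]) auto
        then have "conn p R (H (z, t')) (H (z, t))" unfolding conn_def by blast
        moreover have "conn p R (H (z, 0)) (H (z, t'))" using Suc t' unfolding t'_def by blast
        ultimately show ?thesis using conn_trans by blast
      qed
    qed
  qed
  have "q z \<le> real (nat \<lceil>2 * q z\<rceil>) / 2" using real_nat_ceiling_ge[of "2 * q z"] by simp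
  then have "conn p R (H (z, 0)) (H (z, q z))" using walk[of "nat \<lceil>2 * q z\<rceil>"] qH(1) zZ by blast
  then have c1: "conn p R (\<xi> n) (\<alpha> z)" using qH(3,4) zZ unfolding \<beta>_def z_def by simp
  have "conn p R y0 (\<xi> n)" using Pgood_conn[OF geo \<xi>(1)[of n]] zZ unfolding z_def by simp
  then show ?thesis using c1 conn_trans zZ unfolding p_def by blast
qed



lemma cover:
  fixes \<alpha> :: "real \<Rightarrow> 'a::metric_space"
  assumes geo: "geodesic_space TYPE('a)" and pm: "proper_metric TYPE('a)"
    and cpc: "coarsely_path_connected TYPE('a)" and ca: "coarse_basepoint \<alpha>"
    and R: "R > 0"
  shows "\<exists>L M. \<forall>y. dist y (\<alpha> 0) = R + 2 \<longrightarrow>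
            ((\<exists>s\<ge>0. \<exists>l\<le>L. lp (\<alpha> 0) R y (\<alpha> s) l) \<or> (\<forall>z. conn (\<alpha> 0) R y z \<longrightarrow> dist z (\<alpha> 0) \<le> M))"
proof -
  define p where "p = \<alpha> 0"
  define S where "S = sphere p (R + 2)"
  have "sphere p (R + 2) = cball p (R + 2) - ball p (R + 2)" by auto
  then have "closed S" unfolding S_def by auto
  moreover have "compact (cball p (R + 2))" using pm unfolding proper_metric_def by blast
  ultimately have "compact (cball p (R + 2) \<inter> S)" by auto
  moreover have "cball p (R + 2) \<inter> S = S" unfolding S_def by auto
  ultimately have cS: "compact S" by simp
  have "\<forall>c. \<exists>v. (\<exists>s\<ge>0. \<exists>l\<le>v. lp p R c (\<alpha> s) l) \<or> (\<forall>z. conn p R c z \<longrightarrow> dist z p \<le> v)"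
  proof
    fix c
    show "\<exists>v. (\<exists>s\<ge>0. \<exists>l\<le>v. lp p R c (\<alpha> s) l) \<or> (\<forall>z. conn p R c z \<longrightarrow> dist z p \<le> v)"
    proof (cases "\<exists>s\<ge>0. conn p R c (\<alpha> s)")
      case True
      then obtain s l where "s \<ge> 0" "lp p R c (\<alpha> s) l" unfolding conn_def by blast
      then show ?thesis by blast
    next
      case False
      then have "\<not> (\<forall>M. \<exists>z. conn p R c z \<and> dist z p \<ge> M)"
        using key[OF geo pm cpc ca, of R c] unfolding p_def by blast
      then obtain M where "\<forall>z. conn p R c z \<longrightarrow> dist z p < M" by (meson not_le)
      then show ?thesis by (meson less_imp_le)
    qed
  qed
  then obtain V where V: "\<And>c. (\<exists>s\<ge>0. \<exists>l\<le>V c. lp p R c (\<alpha> s) l) \<or> (\<forall>z. conn p R c z \<longrightarrow> dist z p \<le> V c)"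
    by metis
  have "S \<subseteq> (\<Union>c\<in>S. ball c 1)" by auto
  then obtain C' where C': "C' \<subseteq> S" "finite C'" "S \<subseteq> (\<Union>c\<in>C'. ball c 1)"
    using compactE_image[OF cS, of S "\<lambda>c. ball c 1"] by blast
  define W where "W = Max (insert 0 (V ` C'))"
  have VW: "V c \<le> W" if "c \<in> C'" for c unfolding W_def using C'(2) that by auto
  show ?thesis
  proof (rule exI[of _ "W + 1"], rule exI[of _ W], intro allI impI)
    fix y assume y: "dist y (\<alpha> 0) = R + 2"
    then have "y \<in> S" unfolding S_def p_def by (simp add: dist_commute)
    then obtain c where c: "c \<in> C'" "dist c y < 1" using C'(3) by auto
    have lyc: "lp p R y c (dist y c)"
      using c y unfolding p_def by (intro conn_near[OF geo]) (auto simp: dist_commute)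
    show "(\<exists>s\<ge>0. \<exists>l\<le>W + 1. lp (\<alpha> 0) R y (\<alpha> s) l) \<or> (\<forall>z. conn (\<alpha> 0) R y z \<longrightarrow> dist z (\<alpha> 0) \<le> W)"
      using V[of c]
    proof
      assume "\<exists>s\<ge>0. \<exists>l\<le>V c. lp p R c (\<alpha> s) l"
      then obtain s l where sl: "s \<ge> 0" "l \<le> V c" "lp p R c (\<alpha> s) l" by blast
      have "lp p R y (\<alpha> s) (dist y c + l)" using lp_trans[OF lyc sl(3)] .
      moreover have "dist y c + l \<le> W + 1" using sl(2) VW[OF c(1)] c(2) by (simp add: dist_commute)
      ultimately show ?thesis using sl(1) unfolding p_def by blast
    next
      assume B: "\<forall>z. conn p R c z \<longrightarrow> dist z p \<le> V c"
      have "dist z p \<le> W" if "conn p R y z" for z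
      proof -
        have "conn p R c y" using lyc conn_sym unfolding conn_def by blast
        then have "conn p R c z" using that conn_trans by blast
        then show ?thesis using B VW[OF c(1)] by force
      qed
      then show ?thesis unfolding p_def by blast
    qed
  qed
qed

theorem lemma5p5:
  fixes \<alpha> :: "real \<Rightarrow> 'a::metric_space" and A :: "'a set"
  assumes "proper_metric TYPE('a)"
    and "geodesic_space TYPE('a)"
    and "coarsely_path_connected TYPE('a)"
    and "coarse_basepoint \<alpha>"
    and "dispersed (\<alpha> 0) A"
  shows "\<exists>\<gamma> \<rho> :: real \<Rightarrow> real.
           (\<forall>t\<ge>0. \<gamma> t \<ge> 0 \<and> \<rho> t \<ge> 0) \<and>
           (\<forall>R>0. \<gamma> R > R) \<and>
           (\<forall>R>0. \<forall>x\<in>A - ball (\<alpha> 0) (\<gamma> R).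
              \<exists>k h. k \<ge> 0 \<and> continuous_on {0..k} h \<and>
                h 0 = x \<and> h k \<in> \<alpha> ` {0..} \<and>
                (\<forall>t\<in>{0..k}. h t \<notin> ball (\<alpha> 0) R) \<and>
                bornologous_on {0..k} \<rho> h \<and>
                k \<le> 2 * dist x (\<alpha> 0))"
proof -
  note pm = assms(1) and geo = assms(2) and cpc = assms(3) and ca = assms(4)
  define p where "p = \<alpha> 0"
  have "\<forall>R. \<exists>L M. R > 0 \<longrightarrow> (\<forall>y. dist y p = R + 2 \<longrightarrow>
            ((\<exists>s\<ge>0. \<exists>l\<le>L. lp p R y (\<alpha> s) l) \<or> (\<forall>z. conn p R y z \<longrightarrow> dist z p \<le> M)))"
    using cover[OF geo pm cpc ca] unfolding p_def by blast
  then obtain Lf Mf where LM: "\<And>R y. R > 0 \<Longrightarrow> dist y p = R + 2 \<Longrightarrow>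
            ((\<exists>s\<ge>0. \<exists>l\<le>Lf R. lp p R y (\<alpha> s) l) \<or> (\<forall>z. conn p R y z \<longrightarrow> dist z p \<le> Mf R))"
    by metis
  define \<gamma> where "\<gamma> = (\<lambda>R. if R > 0 then max (R + 3) (max (Mf R + 1) (Lf R)) else 0)"
  define \<rho> where "\<rho> = (\<lambda>t::real. t)"
  have main: "\<exists>k h. k \<ge> 0 \<and> continuous_on {0..k} h \<and>
                h 0 = x \<and> h k \<in> \<alpha> ` {0..} \<and>
                (\<forall>t\<in>{0..k}. h t \<notin> ball (\<alpha> 0) R) \<and>
                bornologous_on {0..k} \<rho> h \<and>
                k \<le> 2 * dist x (\<alpha> 0)"
    if R: "R > 0" and x: "x \<in> A - ball (\<alpha> 0) (\<gamma> R)" for R x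
  proof -
    have gx: "dist x p \<ge> \<gamma> R" using x unfolding p_def by (auto simp: dist_commute)
    have g: "\<gamma> R \<ge> R + 3" "\<gamma> R \<ge> Mf R + 1" "\<gamma> R \<ge> Lf R" using R unfolding \<gamma>_def by auto
    obtain y where y: "dist y p = R + 2" "lp p R x y (dist x p - (R + 2))"
      using lp_toward[OF geo, of "R + 2" x p R] gx g R by auto
    have "conn p R y x" using lp_sym[OF y(2)] unfolding conn_def by blast
    moreover have "\<not> dist x p \<le> Mf R" using gx g by linarith
    ultimately obtain s l where sl: "s \<ge> 0" "l \<le> Lf R" "lp p R y (\<alpha> s) l"
      using LM[OF R y(1)] by blast
    define k where "k = dist x p - (R + 2) + l"
    have "lp p R x (\<alpha> s) k" unfolding k_def by (rule lp_trans[OF y(2) sl(3)])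
    then obtain h where h: "k \<ge> 0" "h 0 = x" "h k = \<alpha> s"
      "\<forall>s\<in>{0..k}. \<forall>t\<in>{0..k}. dist (h s) (h t) \<le> \<bar>s - t\<bar>" "\<forall>t\<in>{0..k}. dist (h t) p > R"
      unfolding lp_def by blast
    have "1-lipschitz_on {0..k} h"
      by (rule lipschitz_onI) (use h(4) in \<open>auto simp: dist_real_def\<close>)
    then have "continuous_on {0..k} h" by (rule lipschitz_on_continuous_on)
    moreover have "bornologous_on {0..k} \<rho> h"
      unfolding bornologous_on_def \<rho>_def using h(4) by (simp add: dist_real_def)
    moreover have "\<forall>t\<in>{0..k}. h t \<notin> ball (\<alpha> 0) R"
      using h(5) unfolding p_def by (auto simp: dist_commute)
    moreover have "h k \<in> \<alpha> ` {0..}" using h(3) sl(1) by auto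
    moreover have "k \<le> 2 * dist x (\<alpha> 0)" unfolding k_def p_def[symmetric]
      using sl(2) g gx R by linarith
    ultimately show ?thesis using h(1,2) by blast
  qed
  show ?thesis
  proof (rule exI[of _ \<gamma>], rule exI[of _ \<rho>], intro conjI allI impI ballI)
    fix t :: real assume "t \<ge> 0"
    then show "\<gamma> t \<ge> 0" unfolding \<gamma>_def by auto
  next
    fix t :: real assume "t \<ge> 0"
    then show "\<rho> t \<ge> 0" unfolding \<rho>_def by auto
  next
    fix R :: real assume "R > 0" then show "\<gamma> R > R" unfolding \<gamma>_def by auto
  next
    fix R x assume "R > 0" "x \<in> A - ball (\<alpha> 0) (\<gamma> R)"
    then show "\<exists>k h. k \<ge> 0 \<and> continuous_on {0..k} h \<and>
                h 0 = x \<and> h k \<in> \<alpha> ` {0..} \<and>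
                (\<forall>t\<in>{0..k}. h t \<notin> ball (\<alpha> 0) R) \<and>
                bornologous_on {0..k} \<rho> h \<and>
                k \<le> 2 * dist x (\<alpha> 0)" by (rule main)
  qed
qed

end
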